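(* For every integer $m>1$ there exists a finite group $G$ with $s(G) > m\,\Gamma_e(G)$.
   Context: For a finite group $G$, $s(G)$ is the sum of all entries of its complex character table and $\Gamma_e(G)$ is the sum of the degrees of its irreducible complex characters. *)

theory Defs
  imports "HOL-Algebra.Group" "Jordan_Normal_Form.Matrix"
begin

definition is_rep :: "('a, 'b) monoid_scheme \<Rightarrow> nat \<Rightarrow> ('a \<Rightarrow> complex mat) \<Rightarrow> bool" where
  "is_rep G n \<rho> \<longleftrightarrow>
     (\<forall>g \<in> carrier G. \<rho> g \<in> carrier_mat n n) \<and>
     \<rho> \<one>\<^bsub>G\<^esub> = 1\<^sub>m n \<and>
     (\<forall>g \<in> carrier G. \<forall>h \<in> carrier G. \<rho> (g \<otimes>\<^bsub>G\<^esub> h) = \<rho> g * \<rho> h)"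

definition invariant_subspace :: "('a, 'b) monoid_scheme \<Rightarrow> nat \<Rightarrow> ('a \<Rightarrow> complex mat) \<Rightarrow> complex vec set \<Rightarrow> bool" where
  "invariant_subspace G n \<rho> W \<longleftrightarrow>
     W \<subseteq> carrier_vec n \<and> 0\<^sub>v n \<in> W \<and>
     (\<forall>v \<in> W. \<forall>w \<in> W. v + w \<in> W) \<and>
     (\<forall>c. \<forall>v \<in> W. c \<cdot>\<^sub>v v \<in> W) \<and>
     (\<forall>g \<in> carrier G. \<forall>v \<in> W. \<rho> g *\<^sub>v v \<in> W)"

definition irreducible_rep :: "('a, 'b) monoid_scheme \<Rightarrow> nat \<Rightarrow> ('a \<Rightarrow> complex mat) \<Rightarrow> bool" where
  "irreducible_rep G n \<rho> \<longleftrightarrow> is_rep G n \<rho> \<and> n > 0 \<and>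
     (\<forall>W. invariant_subspace G n \<rho> W \<longrightarrow> W = {0\<^sub>v n} \<or> W = carrier_vec n)"

definition mat_trace :: "complex mat \<Rightarrow> complex" where
  "mat_trace A = (\<Sum>i < dim_row A. A $$ (i, i))"

definition character :: "('a, 'b) monoid_scheme \<Rightarrow> ('a \<Rightarrow> complex mat) \<Rightarrow> 'a \<Rightarrow> complex" where
  "character G \<rho> = (\<lambda>g. if g \<in> carrier G then mat_trace (\<rho> g) else 0)"

definition irr_chars :: "('a, 'b) monoid_scheme \<Rightarrow> ('a \<Rightarrow> complex) set" where
  "irr_chars G = {character G \<rho> | n \<rho>. irreducible_rep G n \<rho>}"

definition conj_class :: "('a, 'b) monoid_scheme \<Rightarrow> 'a \<Rightarrow> 'a set" where
  "conj_class G g = {h \<otimes>\<^bsub>G\<^esub> g \<otimes>\<^bsub>G\<^esub> inv\<^bsub>G\<^esub> h | h. h \<in> carrier G}"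

definition conj_classes :: "('a, 'b) monoid_scheme \<Rightarrow> 'a set set" where
  "conj_classes G = conj_class G ` carrier G"

text \<open>s(G): sum of all entries of the character table (rows: irreducible characters,
  columns: conjugacy classes, entry = value at any representative of the class).\<close>

definition char_table_sum :: "('a, 'b) monoid_scheme \<Rightarrow> complex" where
  "char_table_sum G = (\<Sum>\<chi> \<in> irr_chars G. \<Sum>C \<in> conj_classes G. \<chi> (SOME g. g \<in> C))"

definition Gamma_e :: "('a, 'b) monoid_scheme \<Rightarrow> complex" where
  "Gamma_e G = (\<Sum>\<chi> \<in> irr_chars G. \<chi> \<one>\<^bsub>G\<^esub>)"

end

theory Submission
  imports Defs "Jordan_Normal_Form.Determinant" "HOL-Computational_Algebra.Primes"
begin


lemma mat_mult_entry:
  assumes "A \<in> carrier_mat n m" "B \<in> carrier_mat m k" "i < n" "j < k"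
  shows "(A * B) $$ (i, j) = (\<Sum>l<m. A $$ (i, l) * B $$ (l, j))"
  using assms by (auto simp: scalar_prod_def lessThan_atLeast0 intro!: sum.cong)

lemma mat_vec_entry:
  assumes "A \<in> carrier_mat n m" "v \<in> carrier_vec m" "i < n"
  shows "(A *\<^sub>v v) $ i = (\<Sum>l<m. A $$ (i, l) * v $ l)"
  using assms by (auto simp: scalar_prod_def lessThan_atLeast0 intro!: sum.cong)

lemma mat_trace_comm:
  assumes "A \<in> carrier_mat n m" "B \<in> carrier_mat m n"
  shows "mat_trace (A * B) = mat_trace (B * A)"
proof -
  have "mat_trace (A * B) = (\<Sum>i<n. (A * B) $$ (i, i))"
    unfolding mat_trace_def using assms by simp
  also have "\<dots> = (\<Sum>i<n. \<Sum>l<m. A $$ (i, l) * B $$ (l, i))"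
    by (rule sum.cong) (use mat_mult_entry[OF assms(1,2)] in auto)
  also have "\<dots> = (\<Sum>l<m. \<Sum>i<n. B $$ (l, i) * A $$ (i, l))"
    by (subst sum.swap) (simp add: mult.commute)
  also have "\<dots> = (\<Sum>l<m. (B * A) $$ (l, l))"
    by (rule sum.cong) (use mat_mult_entry[OF assms(2,1)] in auto)
  also have "\<dots> = mat_trace (B * A)"
    unfolding mat_trace_def using assms by simp
  finally show ?thesis .
qed

lemma kernel_nonzero:
  fixes A :: "complex mat"
  assumes A: "A \<in> carrier_mat n m" and nm: "n < m"
  shows "\<exists>v \<in> carrier_vec m. v \<noteq> 0\<^sub>v m \<and> A *\<^sub>v v = 0\<^sub>v n"
proof -
  define A' where "A' = mat m m (\<lambda>(i,j). if i < n then A $$ (i,j) else 0)"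
  have A'c: "A' \<in> carrier_mat m m" unfolding A'_def by auto
  have "det A' = 0"
  proof -
    have z: "(\<Prod> i = 0 ..< m. A' $$ (i, p i)) = 0" if "p permutes {0..<m}" for p
      using that nm by (intro prod_zero bexI[of _ "m - 1"]) (auto simp: A'_def permutes_in_image)
    have "det A' = (\<Sum> p \<in> {p. p permutes {0 ..< m}}. signof p * (\<Prod> i = 0 ..< m. A' $$ (i, p i)))"
      unfolding det_def using A'c by simp
    also have "\<dots> = 0" by (rule sum.neutral) (use z in simp)
    finally show ?thesis .
  qed
  then obtain v where v: "v \<in> carrier_vec m" "v \<noteq> 0\<^sub>v m" "A' *\<^sub>v v = 0\<^sub>v m"
    using det_0_iff_vec_prod_zero[OF A'c] by auto
  have "A *\<^sub>v v = 0\<^sub>v n"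
  proof (rule eq_vecI)
    fix i assume "i < dim_vec (0\<^sub>v n :: complex vec)"
    then have i: "i < n" by simp
    have "(A *\<^sub>v v) $ i = (\<Sum>l<m. A $$ (i,l) * v $ l)" by (rule mat_vec_entry[OF A v(1) i])
    also have "\<dots> = (\<Sum>l<m. A' $$ (i,l) * v $ l)" using i nm by (auto simp: A'_def intro!: sum.cong)
    also have "\<dots> = (A' *\<^sub>v v) $ i" using i nm by (intro mat_vec_entry[symmetric, OF A'c v(1)]) simp
    also have "\<dots> = 0" using v(3) i nm by simp
    finally show "(A *\<^sub>v v) $ i = 0\<^sub>v n $ i" using i by simp
  qed (use A in auto)
  with v show ?thesis by auto
qed

lemma mat_vec_zero_right:
  fixes T :: "complex mat"
  assumes "T \<in> carrier_mat n m"
  shows "T *\<^sub>v 0\<^sub>v m = 0\<^sub>v n"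
  using assms by (intro eq_vecI) (auto simp: scalar_prod_def)

lemma mat_unit_col:
  fixes T :: "complex mat"
  assumes "T \<in> carrier_mat n m" "l < m" "i < n"
  shows "(T *\<^sub>v unit_vec m l) $ i = T $$ (i, l)"
  using assms by simp

lemma schur_char:
  fixes T :: "complex mat"
  assumes r: "irreducible_rep G n \<rho>" and s: "irreducible_rep G n' \<sigma>"
  and T: "T \<in> carrier_mat n n'" and inter: "\<And>g. g \<in> carrier G \<Longrightarrow> \<rho> g * T = T * \<sigma> g"
  and nz: "T \<noteq> 0\<^sub>m n n'"
  shows "character G \<rho> = character G \<sigma>"
proof -
  have rc: "\<And>g. g \<in> carrier G \<Longrightarrow> \<rho> g \<in> carrier_mat n n"
    and rirr: "\<And>W. invariant_subspace G n \<rho> W \<Longrightarrow> W = {0\<^sub>v n} \<or> W = carrier_vec n"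
    using r unfolding irreducible_rep_def is_rep_def by auto
  have sc: "\<And>g. g \<in> carrier G \<Longrightarrow> \<sigma> g \<in> carrier_mat n' n'"
    and sirr: "\<And>W. invariant_subspace G n' \<sigma> W \<Longrightarrow> W = {0\<^sub>v n'} \<or> W = carrier_vec n'"
    using s unfolding irreducible_rep_def is_rep_def by auto
  obtain l where l: "l < n'" and Tl: "T *\<^sub>v unit_vec n' l \<noteq> 0\<^sub>v n"
  proof -
    have "\<exists>l < n'. T *\<^sub>v unit_vec n' l \<noteq> 0\<^sub>v n"
    proof (rule ccontr)
      assume "\<not> ?thesis"
      then have z: "\<And>l. l < n' \<Longrightarrow> T *\<^sub>v unit_vec n' l = 0\<^sub>v n" by auto
      have "T = 0\<^sub>m n n'"
      proof (rule eq_matI)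
        fix i j assume "i < dim_row (0\<^sub>m n n' :: complex mat)" "j < dim_col (0\<^sub>m n n' :: complex mat)"
        then have ij: "i < n" "j < n'" by auto
        have "T $$ (i, j) = (T *\<^sub>v unit_vec n' j) $ i" using mat_unit_col[OF T ij(2) ij(1)] by simp
        also have "\<dots> = 0" using z[OF ij(2)] ij by simp
        finally show "T $$ (i, j) = 0\<^sub>m n n' $$ (i, j)" using ij by simp
      qed (use T in auto)
      with nz show False by simp
    qed
    then show ?thesis using that by blast
  qed
  define K where "K = {v \<in> carrier_vec n'. T *\<^sub>v v = 0\<^sub>v n}"
  have "invariant_subspace G n' \<sigma> K"
    unfolding invariant_subspace_def
  proof (intro conjI ballI allI)
    show "K \<subseteq> carrier_vec n'" unfolding K_def by auto
    show "0\<^sub>v n' \<in> K" unfolding K_def using mat_vec_zero_right[OF T] by auto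
    fix v assume v: "v \<in> K"
    then have vc: "v \<in> carrier_vec n'" and Tv: "T *\<^sub>v v = 0\<^sub>v n" unfolding K_def by auto
    {
      fix w assume "w \<in> K"
      then have wc: "w \<in> carrier_vec n'" and Tw: "T *\<^sub>v w = 0\<^sub>v n" unfolding K_def by auto
      show "v + w \<in> K" unfolding K_def using mult_add_distrib_mat_vec[OF T vc wc] Tv Tw vc wc by auto
    }
    fix c :: complex
    show "c \<cdot>\<^sub>v v \<in> K" unfolding K_def using mult_mat_vec[OF T vc, of c] Tv vc by auto
  next
    fix g v assume g: "g \<in> carrier G" and v: "v \<in> K"
    then have vc: "v \<in> carrier_vec n'" and Tv: "T *\<^sub>v v = 0\<^sub>v n" unfolding K_def by auto
    have "T *\<^sub>v (\<sigma> g *\<^sub>v v) = (T * \<sigma> g) *\<^sub>v v" using T sc[OF g] vc by simp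
    also have "\<dots> = (\<rho> g * T) *\<^sub>v v" using inter[OF g] by simp
    also have "\<dots> = \<rho> g *\<^sub>v (T *\<^sub>v v)" using T rc[OF g] vc by simp
    also have "\<dots> = 0\<^sub>v n" using Tv mat_vec_zero_right[OF rc[OF g]] by simp
    finally show "\<sigma> g *\<^sub>v v \<in> K" unfolding K_def using sc[OF g] vc by auto
  qed
  then have "K = {0\<^sub>v n'} \<or> K = carrier_vec n'" by (rule sirr)
  moreover have "unit_vec n' l \<notin> K" using Tl unfolding K_def by auto
  ultimately have Kz: "K = {0\<^sub>v n'}" using l by auto
  have inj: "\<And>v. v \<in> carrier_vec n' \<Longrightarrow> T *\<^sub>v v = 0\<^sub>v n \<Longrightarrow> v = 0\<^sub>v n'"
    using Kz unfolding K_def by auto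
  define I where "I = {T *\<^sub>v v | v. v \<in> carrier_vec n'}"
  have "invariant_subspace G n \<rho> I"
    unfolding invariant_subspace_def
  proof (intro conjI ballI allI)
    show "I \<subseteq> carrier_vec n" unfolding I_def using T by auto
    show "0\<^sub>v n \<in> I" unfolding I_def using mat_vec_zero_right[OF T] by (auto intro!: exI[of _ "0\<^sub>v n'"])
    fix v assume "v \<in> I"
    then obtain v' where vc: "v' \<in> carrier_vec n'" and v: "v = T *\<^sub>v v'" unfolding I_def by auto
    {
      fix w assume "w \<in> I"
      then obtain w' where wc: "w' \<in> carrier_vec n'" and w: "w = T *\<^sub>v w'" unfolding I_def by auto
      show "v + w \<in> I" unfolding I_def using mult_add_distrib_mat_vec[OF T vc wc] v w vc wc
        by (auto intro!: exI[of _ "v' + w'"])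
    }
    fix c :: complex
    show "c \<cdot>\<^sub>v v \<in> I" unfolding I_def using mult_mat_vec[OF T vc, of c] v vc
      by (auto intro!: exI[of _ "c \<cdot>\<^sub>v v'"])
  next
    fix g v assume g: "g \<in> carrier G" and "v \<in> I"
    then obtain v' where vc: "v' \<in> carrier_vec n'" and v: "v = T *\<^sub>v v'" unfolding I_def by auto
    have "\<rho> g *\<^sub>v v = (\<rho> g * T) *\<^sub>v v'" using T rc[OF g] vc v by simp
    also have "\<dots> = (T * \<sigma> g) *\<^sub>v v'" using inter[OF g] by simp
    also have "\<dots> = T *\<^sub>v (\<sigma> g *\<^sub>v v')" using T sc[OF g] vc by simp
    finally show "\<rho> g *\<^sub>v v \<in> I" unfolding I_def using sc[OF g] vc by auto
  qed
  then have "I = {0\<^sub>v n} \<or> I = carrier_vec n" by (rule rirr)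
  moreover have "T *\<^sub>v unit_vec n' l \<in> I" unfolding I_def by auto
  ultimately have Iall: "I = carrier_vec n" using Tl by auto
  have n'n: "n' \<le> n"
  proof (rule ccontr)
    assume "\<not> n' \<le> n"
    then obtain v where "v \<in> carrier_vec n'" "v \<noteq> 0\<^sub>v n'" "T *\<^sub>v v = 0\<^sub>v n"
      using kernel_nonzero[OF T] by auto
    with inj show False by auto
  qed
  have nn': "n \<le> n'"
  proof (rule ccontr)
    assume "\<not> n \<le> n'"
    then obtain w where wc: "w \<in> carrier_vec n" and wnz: "w \<noteq> 0\<^sub>v n" and Tw: "transpose_mat T *\<^sub>v w = 0\<^sub>v n'"
      using kernel_nonzero[of "transpose_mat T" n' n] T by auto
    obtain j where j: "j < n" and wj: "w $ j \<noteq> 0"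
    proof -
      have "\<exists>j<n. w $ j \<noteq> 0"
      proof (rule ccontr)
        assume "\<not> ?thesis"
        then have "w = 0\<^sub>v n" using wc by (intro eq_vecI) auto
        with wnz show False by simp
      qed
      then show ?thesis using that by blast
    qed
    have "unit_vec n j \<in> I" using Iall by simp
    then obtain u where uc: "u \<in> carrier_vec n'" and u: "unit_vec n j = T *\<^sub>v u" unfolding I_def by auto
    have "(\<Sum>i<n. w $ i * (T *\<^sub>v u) $ i) = (\<Sum>i<n. w $ i * (if i = j then 1 else 0))"
      by (rule sum.cong) (use j in \<open>auto simp: u[symmetric]\<close>)
    also have "\<dots> = w $ j" using j by (simp add: if_distrib cong: if_cong)
    finally have e1: "(\<Sum>i<n. w $ i * (T *\<^sub>v u) $ i) = w $ j" .
    have "(\<Sum>i<n. w $ i * (T *\<^sub>v u) $ i) = (\<Sum>i<n. w $ i * (\<Sum>k<n'. T $$ (i,k) * u $ k))"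
      by (rule sum.cong) (use mat_vec_entry[OF T uc] in auto)
    also have "\<dots> = (\<Sum>k<n'. u $ k * (\<Sum>i<n. transpose_mat T $$ (k,i) * w $ i))"
      by (simp add: sum_distrib_left sum_distrib_right mult_ac) (subst sum.swap, use T in simp)
    also have "\<dots> = (\<Sum>k<n'. u $ k * (transpose_mat T *\<^sub>v w) $ k)"
      by (rule sum.cong) (use mat_vec_entry[of "transpose_mat T" n' n w] T wc in auto)
    also have "\<dots> = 0" using Tw by simp
    finally show False using e1 wj by simp
  qed
  have nn: "n' = n" using n'n nn' by simp
  have Tc: "T \<in> carrier_mat n n" using T nn by simp
  have "det T \<noteq> 0"
    using det_0_iff_vec_prod_zero[OF Tc] inj nn by auto
  from det_non_zero_imp_unit[OF Tc this, of "()"]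
  obtain S where Sc: "S \<in> carrier_mat n n" and ST: "S * T = 1\<^sub>m n" and TS: "T * S = 1\<^sub>m n"
    unfolding Units_def ring_mat_def by auto
  show ?thesis
  proof
    fix g show "character G \<rho> g = character G \<sigma> g"
    proof (cases "g \<in> carrier G")
      case True
      note rg = rc[OF True] and sg = sc[OF True, unfolded nn]
      have "\<sigma> g = (S * T) * \<sigma> g" using ST sg by simp
      also have "\<dots> = S * (T * \<sigma> g)" using Sc Tc sg by simp
      also have "\<dots> = S * (\<rho> g * T)" using inter[OF True] by simp
      finally have sgeq: "\<sigma> g = S * (\<rho> g * T)" .
      have "mat_trace (\<sigma> g) = mat_trace ((\<rho> g * T) * S)"
        unfolding sgeq using Sc Tc rg by (intro mat_trace_comm) auto
      also have "\<dots> = mat_trace (\<rho> g * (T * S))" using Sc Tc rg by simp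
      also have "\<dots> = mat_trace (\<rho> g)" using TS rg by simp
      finally show ?thesis unfolding character_def using True by simp
    next
      case False then show ?thesis unfolding character_def by simp
    qed
  qed
qed

lemma char_orth:
  fixes G (structure)
  assumes G: "group G" "finite (carrier G)"
    and r: "irreducible_rep G n \<rho>" and s: "irreducible_rep G n' \<sigma>"
    and ne: "character G \<rho> \<noteq> character G \<sigma>"
  shows "(\<Sum>g\<in>carrier G. character G \<rho> g * character G \<sigma> (inv\<^bsub>G\<^esub> g)) = 0"
proof -
  interpret group G by (rule G(1))
  have rc: "\<And>g. g \<in> carrier G \<Longrightarrow> \<rho> g \<in> carrier_mat n n"
    and rh: "\<And>g h. g \<in> carrier G \<Longrightarrow> h \<in> carrier G \<Longrightarrow> \<rho> (g \<otimes> h) = \<rho> g * \<rho> h"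
    using r unfolding irreducible_rep_def is_rep_def by auto
  have sc: "\<And>g. g \<in> carrier G \<Longrightarrow> \<sigma> g \<in> carrier_mat n' n'"
    and sh: "\<And>g h. g \<in> carrier G \<Longrightarrow> h \<in> carrier G \<Longrightarrow> \<sigma> (g \<otimes> h) = \<sigma> g * \<sigma> h"
    using s unfolding irreducible_rep_def is_rep_def by auto
  have Z: "(\<Sum>g\<in>carrier G. \<rho> g $$ (i,j) * \<sigma> (inv g) $$ (k,l)) = 0"
    if jk: "j < n" "k < n'" "i < n" "l < n'" for j k i l
  proof -
    define T where "T = mat n n' (\<lambda>(i,l). \<Sum>g\<in>carrier G. \<rho> g $$ (i,j) * \<sigma> (inv g) $$ (k,l))"
    have Tc: "T \<in> carrier_mat n n'" unfolding T_def by auto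
    have inter: "\<rho> h * T = T * \<sigma> h" if h: "h \<in> carrier G" for h
    proof (rule eq_matI)
      have l_inv_aux: "\<And>x. x \<in> carrier G \<Longrightarrow> x \<otimes> inv h \<otimes> h = x" using h by (simp add: m_assoc)
      fix a b assume "a < dim_row (T * \<sigma> h)" "b < dim_col (T * \<sigma> h)"
      then have ab: "a < n" "b < n'" using Tc sc[OF h] by auto
      have "(\<rho> h * T) $$ (a,b) = (\<Sum>m<n. \<rho> h $$ (a,m) * T $$ (m,b))"
        by (rule mat_mult_entry[OF rc[OF h] Tc ab])
      also have "\<dots> = (\<Sum>m<n. \<rho> h $$ (a,m) * (\<Sum>g\<in>carrier G. \<rho> g $$ (m,j) * \<sigma> (inv g) $$ (k,b)))"
        by (rule sum.cong) (use ab in \<open>auto simp: T_def\<close>)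
      also have "\<dots> = (\<Sum>g\<in>carrier G. (\<Sum>m<n. \<rho> h $$ (a,m) * \<rho> g $$ (m,j)) * \<sigma> (inv g) $$ (k,b))"
        by (simp add: sum_distrib_left sum_distrib_right mult_ac) (rule sum.swap)
      also have "\<dots> = (\<Sum>g\<in>carrier G. \<rho> (h \<otimes> g) $$ (a,j) * \<sigma> (inv g) $$ (k,b))"
        by (rule sum.cong) (use h ab jk in \<open>auto simp: rh mat_mult_entry[OF rc rc]\<close>)
      also have "\<dots> = (\<Sum>g\<in>carrier G. \<rho> g $$ (a,j) * \<sigma> (inv g \<otimes> h) $$ (k,b))"
        by (rule sum.reindex_bij_witness[of _ "\<lambda>g. inv h \<otimes> g" "\<lambda>g. h \<otimes> g"])
           (use h in \<open>auto simp: m_assoc[symmetric] inv_mult_group l_inv_aux\<close>)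
      also have "\<dots> = (\<Sum>g\<in>carrier G. \<rho> g $$ (a,j) * (\<Sum>m<n'. \<sigma> (inv g) $$ (k,m) * \<sigma> h $$ (m,b)))"
        by (rule sum.cong) (use h ab jk in \<open>auto simp: sh mat_mult_entry[OF sc sc]\<close>)
      also have "\<dots> = (\<Sum>m<n'. (\<Sum>g\<in>carrier G. \<rho> g $$ (a,j) * \<sigma> (inv g) $$ (k,m)) * \<sigma> h $$ (m,b))"
        by (simp add: sum_distrib_left sum_distrib_right mult_ac) (rule sum.swap)
      also have "\<dots> = (\<Sum>m<n'. T $$ (a,m) * \<sigma> h $$ (m,b))"
        by (rule sum.cong) (use ab in \<open>auto simp: T_def\<close>)
      also have "\<dots> = (T * \<sigma> h) $$ (a,b)"
        by (rule mat_mult_entry[symmetric, OF Tc sc[OF h] ab])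
      finally show "(\<rho> h * T) $$ (a,b) = (T * \<sigma> h) $$ (a,b)" .
    qed (use Tc sc[OF h] rc[OF h] in auto)
    have "T = 0\<^sub>m n n'"
    proof (rule ccontr)
      assume "T \<noteq> 0\<^sub>m n n'"
      from schur_char[OF r s Tc inter this] ne show False by simp
    qed
    then have "T $$ (i,l) = 0" using jk by simp
    then show ?thesis using jk by (simp add: T_def)
  qed
  have "(\<Sum>g\<in>carrier G. character G \<rho> g * character G \<sigma> (inv g))
     = (\<Sum>g\<in>carrier G. (\<Sum>i<n. \<rho> g $$ (i,i)) * (\<Sum>k<n'. \<sigma> (inv g) $$ (k,k)))"
  proof (rule sum.cong)
    fix g assume g: "g \<in> carrier G"
    have "dim_row (\<rho> g) = n" "dim_row (\<sigma> (inv g)) = n'" using rc[OF g] sc[OF inv_closed[OF g]] by auto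
    then show "character G \<rho> g * character G \<sigma> (inv g) = (\<Sum>i<n. \<rho> g $$ (i,i)) * (\<Sum>k<n'. \<sigma> (inv g) $$ (k,k))"
      using g inv_closed[OF g] by (simp add: character_def mat_trace_def)
  qed simp
  also have "\<dots> = (\<Sum>g\<in>carrier G. \<Sum>i<n. \<Sum>k<n'. \<rho> g $$ (i,i) * \<sigma> (inv g) $$ (k,k))"
    by (simp add: sum_product)
  also have "\<dots> = (\<Sum>i<n. \<Sum>g\<in>carrier G. \<Sum>k<n'. \<rho> g $$ (i,i) * \<sigma> (inv g) $$ (k,k))"
    by (rule sum.swap)
  also have "\<dots> = (\<Sum>i<n. \<Sum>k<n'. \<Sum>g\<in>carrier G. \<rho> g $$ (i,i) * \<sigma> (inv g) $$ (k,k))"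
    by (rule sum.cong[OF refl]) (rule sum.swap)
  also have "\<dots> = 0" using Z by simp
  finally show ?thesis .
qed

lemma completeness:
  fixes G (structure)
  assumes G: "group G" "finite (carrier G)"
    and L: "finite L" "L \<subseteq> irr_chars G"
    and R: "\<And>h. h \<in> carrier G \<Longrightarrow> (\<Sum>\<psi>\<in>L. \<psi> \<one>\<^bsub>G\<^esub> * \<psi> h) = (if h = \<one>\<^bsub>G\<^esub> then of_nat (card (carrier G)) else 0)"
  shows "irr_chars G \<subseteq> L"
proof
  interpret group G by (rule G(1))
  fix \<chi> assume "\<chi> \<in> irr_chars G"
  then obtain n \<rho> where r: "irreducible_rep G n \<rho>" and chi: "\<chi> = character G \<rho>"
    unfolding irr_chars_def by auto
  show "\<chi> \<in> L"
  proof (rule ccontr)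
    assume nL: "\<chi> \<notin> L"
    have O: "(\<Sum>g\<in>carrier G. \<chi> g * \<psi> (inv g)) = 0" if "\<psi> \<in> L" for \<psi>
    proof -
      from that L(2) obtain n' \<sigma> where s: "irreducible_rep G n' \<sigma>" and psi: "\<psi> = character G \<sigma>"
        unfolding irr_chars_def by auto
      have "character G \<rho> \<noteq> character G \<sigma>" using nL that chi psi by auto
      from char_orth[OF G r s this] show ?thesis using chi psi by simp
    qed
    have "0 = (\<Sum>\<psi>\<in>L. \<psi> \<one> * (\<Sum>g\<in>carrier G. \<chi> g * \<psi> (inv g)))"
      using O by simp
    also have "\<dots> = (\<Sum>g\<in>carrier G. \<chi> g * (\<Sum>\<psi>\<in>L. \<psi> \<one> * \<psi> (inv g)))"
      by (simp add: sum_distrib_left sum_distrib_right mult_ac) (rule sum.swap)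
    also have "\<dots> = (\<Sum>g\<in>carrier G. \<chi> g * (if g = \<one> then of_nat (card (carrier G)) else 0))"
      by (rule sum.cong) (auto simp: R)
    also have "\<dots> = \<chi> \<one> * of_nat (card (carrier G))"
      by (simp add: if_distrib sum.delta G(2) cong: if_cong)
    also have "\<chi> \<one> = of_nat n"
      using r unfolding chi character_def irreducible_rep_def is_rep_def mat_trace_def by simp
    finally have "of_nat n * of_nat (card (carrier G)) = (0::complex)" by simp
    moreover have "n > 0" using r unfolding irreducible_rep_def by simp
    moreover have "card (carrier G) > 0" using G(2) one_closed card_gt_0_iff by blast
    ultimately show False by simp
  qed
qed



lemma modE1: "(a + b mod p * c) mod p = (a + b * c) mod (p::nat)" by (metis mod_add_right_eq mod_mult_left_eq)
lemma modE2: "(a + c * (b mod p)) mod p = (a + c * b) mod (p::nat)" by (metis mod_add_right_eq mod_mult_right_eq)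
lemma modE3: "(b mod p * c) mod p = (b * c) mod (p::nat)" by (metis mod_mult_left_eq)
lemma modE4: "(c * (b mod p)) mod p = (c * b) mod (p::nat)" by (metis mod_mult_right_eq)

lemma neg_mod_add: "x < (p::nat) \<Longrightarrow> ((p - x) mod p + x) mod p = 0"
  by (simp add: mod_add_left_eq)

locale heis =
  fixes p :: nat
  assumes prime_p: "prime p"
begin

lemma p_gt1: "p > 1" using prime_p prime_gt_1_nat by blast
lemma p_pos: "p > 0" using p_gt1 by simp

definition X :: "nat \<Rightarrow> nat" where "X a = a mod p"
definition Y :: "nat \<Rightarrow> nat" where "Y a = a div p mod p"
definition Z :: "nat \<Rightarrow> nat" where "Z a = a div p div p"
definition E :: "nat \<Rightarrow> nat \<Rightarrow> nat \<Rightarrow> nat" where "E x y z = x + p * (y + p * z)"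

definition N :: nat where "N = p * p * p"

lemma X_lt[simp]: "X a < p" unfolding X_def using p_pos by simp
lemma Y_lt[simp]: "Y a < p" unfolding Y_def using p_pos by simp
lemma Z_lt: "a < N \<Longrightarrow> Z a < p" unfolding Z_def N_def
  by (simp add: div_less_iff_less_mult mult.assoc p_pos mult.commute)

lemma E_lt: "x < p \<Longrightarrow> y < p \<Longrightarrow> z < p \<Longrightarrow> E x y z < N"
proof -
  assume a: "x < p" "y < p" "z < p"
  have "y + p * z \<le> p - 1 + p * (p - 1)" using a by (intro add_mono) auto
  also have "\<dots> = p * p - 1" using p_pos by (simp add: algebra_simps)
  finally have "y + p * z < p * p" using p_pos by (metis diff_less le_less_trans less_one nat_0_less_mult_iff)
  then have "y + p * z + 1 \<le> p * p" by simp
  then have "p * (y + p * z + 1) \<le> p * (p * p)" by (rule mult_le_mono2)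
  then have "p * (y + p * z) + p \<le> p * p * p" by (simp add: algebra_simps)
  then show ?thesis unfolding E_def N_def using a by simp
qed

lemma X_E[simp]: "x < p \<Longrightarrow> X (E x y z) = x" unfolding X_def E_def by simp
lemma Y_E[simp]: "x < p \<Longrightarrow> y < p \<Longrightarrow> Y (E x y z) = y" unfolding Y_def E_def
  using p_pos by simp
lemma Z_E[simp]: "x < p \<Longrightarrow> y < p \<Longrightarrow> Z (E x y z) = z" unfolding Z_def E_def
  using p_pos by simp

lemma E_XYZ: "E (X a) (Y a) (Z a) = a" unfolding E_def X_def Y_def Z_def
  by (metis add.commute div_mult_mod_eq mult.commute)

lemma heq: "X a = X b \<Longrightarrow> Y a = Y b \<Longrightarrow> Z a = Z b \<Longrightarrow> a = b"
  by (metis E_XYZ)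

definition mul :: "nat \<Rightarrow> nat \<Rightarrow> nat" where
  "mul a b = E ((X a + X b) mod p) ((Y a + Y b) mod p) ((Z a + Z b + Y a * X b) mod p)"

lemma X_mul[simp]: "X (mul a b) = (X a + X b) mod p" unfolding mul_def using p_pos by simp
lemma Y_mul[simp]: "Y (mul a b) = (Y a + Y b) mod p" unfolding mul_def using p_pos by simp
lemma Z_mul[simp]: "Z (mul a b) = (Z a + Z b + Y a * X b) mod p" unfolding mul_def using p_pos by simp
lemma mul_lt: "mul a b < N" unfolding mul_def using p_pos by (intro E_lt) auto

lemma XYZ_0[simp]: "X 0 = 0" "Y 0 = 0" "Z 0 = 0" unfolding X_def Y_def Z_def by auto

definition G :: "nat monoid" where
  "G = \<lparr>carrier = {..<N}, mult = mul, one = 0\<rparr>"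

lemma G_simps[simp]: "carrier G = {..<N}" "mult G = mul" "one G = 0"
  unfolding G_def by auto

lemma N_pos: "0 < N" unfolding N_def using p_pos by simp

lemma group_G: "group G"
proof (rule groupI)
  show "\<one>\<^bsub>G\<^esub> \<in> carrier G" using N_pos by simp
  fix x y z assume x: "x \<in> carrier G" and y: "y \<in> carrier G" and z: "z \<in> carrier G"
  show "x \<otimes>\<^bsub>G\<^esub> y \<in> carrier G" using mul_lt by simp
  show "x \<otimes>\<^bsub>G\<^esub> y \<otimes>\<^bsub>G\<^esub> z = x \<otimes>\<^bsub>G\<^esub> (y \<otimes>\<^bsub>G\<^esub> z)"
  proof -
    have "Z (mul (mul x y) z) = Z (mul x (mul y z))"
    proof -
      have "Z (mul (mul x y) z) = ((Z x + Z y + Y x * X y) mod p + Z z + ((Y x + Y y) mod p) * X z) mod p" by simp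
      also have "\<dots> = (Z x + Z y + Y x * X y + Z z + (Y x + Y y) * X z) mod p" by (intro mod_add_cong mod_mult_cong) simp_all
      also have "\<dots> = (Z x + (Z y + Z z + Y y * X z) + Y x * (X y + X z)) mod p" by (simp add: algebra_simps)
      also have "\<dots> = (Z x + (Z y + Z z + Y y * X z) mod p + Y x * ((X y + X z) mod p)) mod p" by (intro mod_add_cong mod_mult_cong) simp_all
      also have "\<dots> = Z (mul x (mul y z))" by simp
      finally show ?thesis .
    qed
    moreover have "X (mul (mul x y) z) = X (mul x (mul y z))"
      by (simp only: X_mul mod_add_left_eq mod_add_right_eq add.assoc)
    moreover have "Y (mul (mul x y) z) = Y (mul x (mul y z))"
      by (simp only: Y_mul mod_add_left_eq mod_add_right_eq add.assoc)
    ultimately have "mul (mul x y) z = mul x (mul y z)" by (rule heq[rotated 2])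
    then show ?thesis by simp
  qed
  show "\<one>\<^bsub>G\<^esub> \<otimes>\<^bsub>G\<^esub> x = x"
  proof -
    have "mul 0 x = x" by (rule heq) (use x Z_lt[of x] in auto)
    then show ?thesis by simp
  qed
  show "\<exists>y\<in>carrier G. y \<otimes>\<^bsub>G\<^esub> x = \<one>\<^bsub>G\<^esub>"
  proof -
    define a where "a = (p - X x) mod p"
    define b where "b = (p - Y x) mod p"
    define t where "t = (Z x + b * X x) mod p"
    define c where "c = (p - t) mod p"
    have a: "a < p" "b < p" "c < p" unfolding a_def b_def c_def using p_pos by auto
    have "mul (E a b c) x = 0"
    proof (rule heq)
      have "X (mul (E a b c) x) = (a + X x) mod p" using a by simp
      also have "\<dots> = 0" unfolding a_def by (rule neg_mod_add) simp
      finally show "X (mul (E a b c) x) = X 0" by simp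
      have "Y (mul (E a b c) x) = (b + Y x) mod p" using a by simp
      also have "\<dots> = 0" unfolding b_def by (rule neg_mod_add) simp
      finally show "Y (mul (E a b c) x) = Y 0" by simp
      have tp: "t < p" unfolding t_def using p_pos by simp
      have "Z (mul (E a b c) x) = (c + Z x + b * X x) mod p" using a by simp
      also have "\<dots> = (c + t) mod p" unfolding t_def by (simp add: mod_simps add.assoc)
      also have "\<dots> = 0" unfolding c_def using tp by (rule neg_mod_add)
      finally show "Z (mul (E a b c) x) = Z 0" by simp
    qed
    moreover have "E a b c \<in> carrier G" using E_lt[OF a] by simp
    ultimately show ?thesis by auto
  qed
qed


definition w :: complex where "w = cis (2 * pi / p)"

lemma w_pow_p: "w ^ p = 1"
  unfolding w_def DeMoivre using p_pos by simp

lemma w_nz: "w \<noteq> 0" unfolding w_def by simp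

lemma w_pow_mod: "w ^ n = w ^ (n mod p)"
proof -
  have "w ^ n = w ^ (p * (n div p) + n mod p)" by simp
  also have "\<dots> = (w ^ p) ^ (n div p) * w ^ (n mod p)" by (simp only: power_add power_mult)
  finally show ?thesis by (simp add: w_pow_p)
qed

lemma w_cong: "m mod p = n mod p \<Longrightarrow> w ^ m = w ^ n"
  by (metis w_pow_mod)

lemma w_pow_eq_1: "w ^ n = 1 \<longleftrightarrow> p dvd n"
proof
  assume "p dvd n"
  then obtain k where "n = p * k" by auto
  then show "w ^ n = 1" by (simp add: power_mult w_pow_p)
next
  assume h: "w ^ n = 1"
  define r where "r = n mod p"
  have r: "r < p" unfolding r_def using p_pos by simp
  have "w ^ r = 1" using h w_pow_mod unfolding r_def by simp
  then have "cis (real r * (2 * pi / p)) = 1" unfolding w_def DeMoivre by simp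
  then have "cos (real r * (2 * pi / p)) = 1" by (metis Re_complex_of_real cis.sel(1) one_complex.sel(1))
  then obtain k :: int where k: "real r * (2 * pi / p) = k * (2 * pi)" using cos_one_2pi_int by auto
  then have "real r = k * p" using p_pos by (simp add: field_simps)
  then have "k * p < p" "k * p \<ge> 0" using r by linarith+
  moreover have "real p > 0" using p_pos by simp
  ultimately have "of_int k \<ge> (0::real)" "(of_int k - 1) * real p < 0"
    by (simp_all add: zero_le_mult_iff algebra_simps)
  then have "of_int k \<ge> (0::real)" "of_int k < (1::real)" using \<open>real p > 0\<close>
    by (simp_all add: mult_less_0_iff)
  then have "k = 0" by linarith
  then have "r = 0" using \<open>real r = k * p\<close> by simp
  then show "p dvd n" unfolding r_def by auto
qed

lemma w_inj: assumes "a < p" "b < p" "w ^ a = w ^ b" shows "a = b"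
proof -
  have *: "x = y" if "x < p" "y < p" "x \<le> y" "w ^ x = w ^ y" for x y
  proof -
    have "w ^ y = w ^ (x + (y - x))" using that by simp
    also have "\<dots> = w ^ x * w ^ (y - x)" by (rule power_add)
    finally have "w ^ y = w ^ x * w ^ (y - x)" .
    then have "w ^ (y - x) = 1" using that w_nz by simp
    then have "p dvd (y - x)" using w_pow_eq_1 by simp
    moreover have "y - x < p" using that by simp
    ultimately show ?thesis using that by (metis diff_is_0_eq dvd_imp_le le_antisym not_less zero_less_diff)
  qed
  show ?thesis using *[of a b] *[of b a] assms by (cases "a \<le> b") auto
qed

lemma geo: "(\<Sum>y<p. w ^ (k * y)) = (if p dvd k then of_nat p else 0)"
proof (cases "p dvd k")
  case True
  then have "w ^ (k * y) = 1" for y using w_pow_eq_1 by simp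
  then show ?thesis using True by simp
next
  case False
  define q where "q = w ^ k"
  have q1: "q \<noteq> 1" unfolding q_def using False w_pow_eq_1 by simp
  have "(\<Sum>y<p. w ^ (k * y)) = (\<Sum>y<p. q ^ y)" unfolding q_def by (simp add: power_mult)
  also have "\<dots> = (q ^ p - 1) / (q - 1)" using q1 by (rule geometric_sum)
  also have "q ^ p = 1" unfolding q_def by (simp add: power_mult[symmetric] mult.commute[of k] power_mult w_pow_p)
  finally show ?thesis using False by simp
qed


definition rlin :: "nat \<Rightarrow> nat \<Rightarrow> nat \<Rightarrow> complex mat" where
  "rlin a b g = mat 1 1 (\<lambda>_. w ^ (a * X g + b * Y g))"

lemma rlin_hom: "rlin a b (mul g h) = rlin a b g * rlin a b h"
proof (rule eq_matI)
  fix i j assume "i < dim_row (rlin a b g * rlin a b h)" "j < dim_col (rlin a b g * rlin a b h)"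
  then have ij: "i = 0" "j = 0" by (auto simp: rlin_def)
  have "(rlin a b g * rlin a b h) $$ (0, 0) = w ^ (a * X g + b * Y g) * w ^ (a * X h + b * Y h)"
    by (subst mat_mult_entry[of _ 1 1 _ 1]) (auto simp: rlin_def)
  also have "\<dots> = w ^ (a * X g + b * Y g + (a * X h + b * Y h))" by (simp add: power_add)
  also have "\<dots> = w ^ (a * ((X g + X h) mod p) + b * ((Y g + Y h) mod p))"
  proof (rule w_cong)
    have "(a * X g + b * Y g + (a * X h + b * Y h)) mod p = (a * (X g + X h) + b * (Y g + Y h)) mod p"
      by (simp add: algebra_simps)
    also have "\<dots> = (a * ((X g + X h) mod p) + b * ((Y g + Y h) mod p)) mod p"
      by (intro mod_add_cong mod_mult_cong) simp_all
    finally show "(a * X g + b * Y g + (a * X h + b * Y h)) mod p = (a * ((X g + X h) mod p) + b * ((Y g + Y h) mod p)) mod p" .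
  qed
  also have "\<dots> = rlin a b (mul g h) $$ (0, 0)" by (simp add: rlin_def)
  finally show "rlin a b (mul g h) $$ (i, j) = (rlin a b g * rlin a b h) $$ (i, j)" using ij by simp
qed (auto simp: rlin_def)

lemma irr_dim1:
  assumes W: "invariant_subspace H 1 \<rho> W"
  shows "W = {0\<^sub>v 1} \<or> W = carrier_vec 1"
proof (cases "\<exists>v\<in>W. v \<noteq> 0\<^sub>v 1")
  case True
  then obtain v where v: "v \<in> W" "v \<noteq> 0\<^sub>v 1" by auto
  have Wc: "W \<subseteq> carrier_vec 1" and sm: "\<And>c v. v \<in> W \<Longrightarrow> c \<cdot>\<^sub>v v \<in> W"
    using W unfolding invariant_subspace_def by auto
  have vc: "v \<in> carrier_vec 1" using v Wc by auto
  have v0: "v $ 0 \<noteq> 0"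
  proof
    assume "v $ 0 = 0"
    then have "v = 0\<^sub>v 1" using vc by (intro eq_vecI) auto
    with v show False by simp
  qed
  have "carrier_vec 1 \<subseteq> W"
  proof
    fix u :: "complex vec" assume u: "u \<in> carrier_vec 1"
    have "u = (u $ 0 / v $ 0) \<cdot>\<^sub>v v" using u vc v0 by (intro eq_vecI) auto
    then show "u \<in> W" using sm[OF v(1)] by metis
  qed
  then show ?thesis using Wc by auto
next
  case False
  then show ?thesis using W unfolding invariant_subspace_def by auto
qed

lemma rlin_irr: "irreducible_rep G 1 (rlin a b)"
  unfolding irreducible_rep_def is_rep_def
proof (intro conjI ballI allI impI)
  show "rlin a b g \<in> carrier_mat 1 1" for g by (simp add: rlin_def)
  show "rlin a b \<one>\<^bsub>G\<^esub> = 1\<^sub>m 1" by (rule eq_matI) (auto simp: rlin_def)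
  show "rlin a b (g \<otimes>\<^bsub>G\<^esub> h) = rlin a b g * rlin a b h" for g h by (simp add: rlin_hom)
  show "(0::nat) < 1" by simp
  show "W = {0\<^sub>v 1} \<or> W = carrier_vec 1" if "invariant_subspace G 1 (rlin a b) W" for W
    using irr_dim1[OF that] .
qed

definition lin_ch :: "nat \<Rightarrow> nat \<Rightarrow> nat \<Rightarrow> complex" where
  "lin_ch a b g = (if g < N then w ^ (a * X g + b * Y g) else 0)"

lemma rlin_char: "character G (rlin a b) = lin_ch a b"
  by (rule ext) (simp add: character_def mat_trace_def rlin_def lin_ch_def)


definition rbig :: "nat \<Rightarrow> nat \<Rightarrow> complex mat" where
  "rbig c g = mat p p (\<lambda>(i,j). if i = (j + X g) mod p then w ^ (c * (Z g + Y g * j)) else 0)"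

lemma rbig_carrier: "rbig c g \<in> carrier_mat p p" by (simp add: rbig_def)

lemma sum_delta_mult: "(t::nat) < m \<Longrightarrow> (\<Sum>k<m. f k * (if k = t then v else 0)) = f t * (v::complex)"
proof -
  assume t: "t < m"
  have "(\<Sum>k<m. f k * (if k = t then v else 0)) = (\<Sum>k<m. if k = t then f k * v else 0)"
    by (rule sum.cong) auto
  also have "\<dots> = f t * v" using t by (subst sum.delta) auto
  finally show ?thesis .
qed

lemma rbig_hom: "rbig c (mul g h) = rbig c g * rbig c h"
proof (rule eq_matI)
  fix i j assume "i < dim_row (rbig c g * rbig c h)" "j < dim_col (rbig c g * rbig c h)"
  then have ij: "i < p" "j < p" by (auto simp: rbig_def)
  define t where "t = (j + X h) mod p"
  have t: "t < p" unfolding t_def using p_pos by simp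
  have "(rbig c g * rbig c h) $$ (i, j) = (\<Sum>k<p. rbig c g $$ (i, k) * rbig c h $$ (k, j))"
    by (rule mat_mult_entry[OF rbig_carrier rbig_carrier ij])
  also have "\<dots> = (\<Sum>k<p. rbig c g $$ (i, k) * (if k = t then w ^ (c * (Z h + Y h * j)) else 0))"
    by (rule sum.cong) (use ij in \<open>auto simp: rbig_def t_def\<close>)
  also have "\<dots> = rbig c g $$ (i, t) * w ^ (c * (Z h + Y h * j))" by (rule sum_delta_mult[OF t])
  also have "\<dots> = (if i = (t + X g) mod p then w ^ (c * (Z g + Y g * t)) * w ^ (c * (Z h + Y h * j)) else 0)"
    using ij t by (simp add: rbig_def)
  also have "\<dots> = rbig c (mul g h) $$ (i, j)"
  proof -
    have c1: "(t + X g) mod p = (j + (X g + X h) mod p) mod p"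
      unfolding t_def by (simp only: mod_add_left_eq mod_add_right_eq ac_simps)
    have "w ^ (c * (Z g + Y g * t)) * w ^ (c * (Z h + Y h * j)) = w ^ (c * (Z g + Y g * t) + c * (Z h + Y h * j))"
      by (simp add: power_add)
    also have "\<dots> = w ^ (c * ((Z g + Z h + Y g * X h) mod p + (Y g + Y h) mod p * j))"
    proof (rule w_cong)
      have "(c * (Z g + Y g * t) + c * (Z h + Y h * j)) mod p = (c * (Z g + Y g * (j + X h)) + c * (Z h + Y h * j)) mod p"
        unfolding t_def by (intro mod_add_cong mod_mult_cong) simp_all
      also have "\<dots> = (c * ((Z g + Z h + Y g * X h) + (Y g + Y h) * j)) mod p"
        by (simp add: algebra_simps)
      also have "\<dots> = (c * ((Z g + Z h + Y g * X h) mod p + (Y g + Y h) mod p * j)) mod p"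
        by (intro mod_add_cong mod_mult_cong) simp_all
      finally show "(c * (Z g + Y g * t) + c * (Z h + Y h * j)) mod p = (c * ((Z g + Z h + Y g * X h) mod p + (Y g + Y h) mod p * j)) mod p" .
    qed
    finally show ?thesis using ij c1 by (simp add: rbig_def)
  qed
  finally show "rbig c (mul g h) $$ (i, j) = (rbig c g * rbig c h) $$ (i, j)" by simp
qed (auto simp: rbig_def)

lemma rbig_one: "rbig c 0 = 1\<^sub>m p"
  by (rule eq_matI) (auto simp: rbig_def)

lemma inv_sum_closed:
  fixes m :: nat
  assumes W: "invariant_subspace H n \<rho> W" and f: "\<And>y. y < m \<Longrightarrow> f y \<in> W"
  shows "vec n (\<lambda>i. \<Sum>y<m. f y $ i) \<in> W"
  using f
proof (induction m)
  case 0
  have "vec n (\<lambda>i. \<Sum>y<0. f y $ i) = 0\<^sub>v n" by (intro eq_vecI) auto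
  then show ?case using W unfolding invariant_subspace_def by simp
next
  case (Suc m)
  have Wc: "W \<subseteq> carrier_vec n" and add: "\<And>v u. v \<in> W \<Longrightarrow> u \<in> W \<Longrightarrow> v + u \<in> W"
    using W unfolding invariant_subspace_def by auto
  have fm: "f m \<in> carrier_vec n" using Suc.prems Wc by auto
  have "vec n (\<lambda>i. \<Sum>y<Suc m. f y $ i) = vec n (\<lambda>i. \<Sum>y<m. f y $ i) + f m"
    using fm by (intro eq_vecI) auto
  moreover have "vec n (\<lambda>i. \<Sum>y<m. f y $ i) \<in> W" using Suc by auto
  ultimately show ?case using add Suc.prems by simp
qed

lemma mod_shift_ne: assumes "j < p" "0 < x" "x < p" shows "(j + x) mod p \<noteq> j"
proof
  assume "(j + x) mod p = j"
  then have "(j + x) mod p = j mod p" using assms by simp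
  then have "p dvd (j + x - j)" using mod_eq_dvd_iff_nat[of j "j + x" p] by simp
  then have "p dvd x" by simp
  then show False using nat_dvd_not_less[OF assms(2,3)] by simp
qed

lemma E_carrier: "x < p \<Longrightarrow> y < p \<Longrightarrow> z < p \<Longrightarrow> E x y z \<in> carrier G"
  using E_lt by simp

lemma rbig_irr: assumes c: "\<not> p dvd c" shows "irreducible_rep G p (rbig c)"
  unfolding irreducible_rep_def is_rep_def
proof (intro conjI ballI allI impI)
  show "rbig c g \<in> carrier_mat p p" for g by (rule rbig_carrier)
  show "rbig c \<one>\<^bsub>G\<^esub> = 1\<^sub>m p" by (simp add: rbig_one)
  show "rbig c (g \<otimes>\<^bsub>G\<^esub> h) = rbig c g * rbig c h" for g h by (simp add: rbig_hom)
  show "0 < p" by (rule p_pos)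
  fix W assume W: "invariant_subspace G p (rbig c) W"
  have Wc: "W \<subseteq> carrier_vec p" using W by (simp add: invariant_subspace_def)
  have sm: "\<And>a v. v \<in> W \<Longrightarrow> a \<cdot>\<^sub>v v \<in> W" using W by (simp add: invariant_subspace_def)
  have act: "\<And>g v. g \<in> carrier G \<Longrightarrow> v \<in> W \<Longrightarrow> rbig c g *\<^sub>v v \<in> W"
    using W unfolding invariant_subspace_def by blast
  have z: "0\<^sub>v p \<in> W" using W by (simp add: invariant_subspace_def)
  show "W = {0\<^sub>v p} \<or> W = carrier_vec p"
  proof (cases "\<exists>v\<in>W. v \<noteq> 0\<^sub>v p")
    case False
    then have "W = {0\<^sub>v p}" using z by blast
    then show ?thesis by simp
  next
    case True
    then obtain v where v: "v \<in> W" "v \<noteq> 0\<^sub>v p" by blast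
    have vc: "v \<in> carrier_vec p" using v Wc by blast
    obtain j where j: "j < p" "v $ j \<noteq> 0"
    proof -
      have "\<exists>j<p. v $ j \<noteq> 0"
      proof (rule ccontr)
        assume "\<not> ?thesis"
        then have "v = 0\<^sub>v p" using vc by (intro eq_vecI) auto
        with v show False by simp
      qed
      then show ?thesis using that by blast
    qed
    define f where "f y = w ^ (c * y * (p - j)) \<cdot>\<^sub>v (rbig c (E 0 y 0) *\<^sub>v v)" for y
    have fW: "f y \<in> W" if "y < p" for y
      unfolding f_def using that p_pos by (intro sm act[OF E_carrier v(1)]) auto
    have fy: "f y $ i = w ^ ((c * (i + (p - j))) * y) * v $ i" if "y < p" "i < p" for y i
    proof -
      have "(rbig c (E 0 y 0) *\<^sub>v v) $ i = (\<Sum>k<p. rbig c (E 0 y 0) $$ (i, k) * v $ k)"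
        by (rule mat_vec_entry[OF rbig_carrier vc that(2)])
      also have "\<dots> = (\<Sum>k<p. v $ k * (if k = i then w ^ (c * (y * i)) else 0))"
        by (rule sum.cong) (use that p_pos in \<open>auto simp: rbig_def\<close>)
      also have "\<dots> = v $ i * w ^ (c * (y * i))" by (rule sum_delta_mult[OF that(2)])
      finally have "(rbig c (E 0 y 0) *\<^sub>v v) $ i = v $ i * w ^ (c * (y * i))" .
      moreover have "f y $ i = w ^ (c * y * (p - j)) * (rbig c (E 0 y 0) *\<^sub>v v) $ i"
        unfolding f_def using that(2) by (simp add: rbig_def)
      ultimately have "f y $ i = w ^ (c * y * (p - j)) * (v $ i * w ^ (c * (y * i)))"
        by simp
      also have "\<dots> = w ^ (c * y * (p - j) + c * (y * i)) * v $ i" by (simp add: power_add)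
      also have "c * y * (p - j) + c * (y * i) = (c * (i + (p - j))) * y" by (simp add: algebra_simps)
      finally show ?thesis .
    qed
    have dv: "p dvd c * (i + (p - j)) \<longleftrightarrow> i = j" if "i < p" for i
    proof -
      have "p dvd c * (i + (p - j)) \<longleftrightarrow> p dvd (i + (p - j))"
        using c prime_p by (simp add: prime_dvd_mult_iff)
      also have "\<dots> \<longleftrightarrow> i = j"
      proof
        assume d: "p dvd (i + (p - j))"
        have "0 < i + (p - j)" "i + (p - j) < 2 * p" using that j by auto
        from d obtain q where q: "i + (p - j) = p * q" by (auto elim: dvdE)
        have "p * q < p * 2" using q \<open>i + (p - j) < 2 * p\<close> by (simp add: mult.commute)
        then have "q < 2" using p_pos by simp
        moreover have "q \<noteq> 0" using q \<open>0 < i + (p - j)\<close> by auto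
        ultimately have "q = 1" by simp
        then show "i = j" using q j that by simp
      next
        assume "i = j"
        then have "i + (p - j) = p" using j by simp
        then show "p dvd (i + (p - j))" by simp
      qed
      finally show ?thesis .
    qed
    have "vec p (\<lambda>i. \<Sum>y<p. f y $ i) \<in> W" by (rule inv_sum_closed[OF W fW])
    moreover have "vec p (\<lambda>i. \<Sum>y<p. f y $ i) = (of_nat p * v $ j) \<cdot>\<^sub>v unit_vec p j"
    proof (rule eq_vecI)
      fix i assume "i < dim_vec ((of_nat p * v $ j) \<cdot>\<^sub>v unit_vec p j)"
      then have i: "i < p" by simp
      have "(\<Sum>y<p. f y $ i) = (\<Sum>y<p. w ^ ((c * (i + (p - j))) * y)) * v $ i"
        by (simp add: fy i sum_distrib_right)
      also have "\<dots> = (if i = j then of_nat p * v $ j else 0)" by (simp add: geo dv[OF i])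
      finally show "vec p (\<lambda>i. \<Sum>y<p. f y $ i) $ i = ((of_nat p * v $ j) \<cdot>\<^sub>v unit_vec p j) $ i"
        using i j by simp
    qed simp
    ultimately have "(of_nat p * v $ j) \<cdot>\<^sub>v unit_vec p j \<in> W" by simp
    from sm[OF this, of "1 / (of_nat p * v $ j)"]
    have uj: "unit_vec p j \<in> W" using j p_pos by (simp add: smult_smult_assoc)
    have ui: "unit_vec p i \<in> W" if i: "i < p" for i
    proof -
      define x where "x = (i + (p - j)) mod p"
      have x: "x < p" unfolding x_def using p_pos by simp
      have "rbig c (E x 0 0) *\<^sub>v unit_vec p j = unit_vec p i"
      proof (rule eq_vecI)
        fix r assume "r < dim_vec (unit_vec p i :: complex vec)"
        then have r: "r < p" by simp
        have jx: "(j + x) mod p = i" unfolding x_def using i j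
          by (simp add: mod_add_right_eq)
        have "(rbig c (E x 0 0) *\<^sub>v unit_vec p j) $ r = (\<Sum>k<p. rbig c (E x 0 0) $$ (r, k) * unit_vec p j $ k)"
          by (rule mat_vec_entry[OF rbig_carrier _ r]) simp
        also have "\<dots> = (\<Sum>k<p. rbig c (E x 0 0) $$ (r, k) * (if k = j then 1 else 0))"
          by (rule sum.cong) (use j in auto)
        also have "\<dots> = rbig c (E x 0 0) $$ (r, j) * 1" by (rule sum_delta_mult[OF j(1)])
        also have "\<dots> = (if r = i then 1 else 0)" using r j x jx p_pos by (simp add: rbig_def)
        finally show "(rbig c (E x 0 0) *\<^sub>v unit_vec p j) $ r = unit_vec p i $ r" using r i by simp
      qed (simp add: rbig_def)
      moreover have "rbig c (E x 0 0) *\<^sub>v unit_vec p j \<in> W" using x p_pos by (intro act[OF E_carrier uj])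
      ultimately show ?thesis by simp
    qed
    have "carrier_vec p \<subseteq> W"
    proof
      fix u :: "complex vec" assume u: "u \<in> carrier_vec p"
      have "vec p (\<lambda>r. \<Sum>i<p. (u $ i \<cdot>\<^sub>v unit_vec p i) $ r) \<in> W"
        by (rule inv_sum_closed[OF W]) (use sm ui in auto)
      moreover have "vec p (\<lambda>r. \<Sum>i<p. (u $ i \<cdot>\<^sub>v unit_vec p i) $ r) = u"
      proof (rule eq_vecI)
        fix r assume "r < dim_vec u" then have r: "r < p" using u by simp
        have "(\<Sum>i<p. (u $ i \<cdot>\<^sub>v unit_vec p i) $ r) = (\<Sum>i<p. u $ i * (if i = r then 1 else 0))"
          by (rule sum.cong) (use r in auto)
        also have "\<dots> = u $ r * 1" by (rule sum_delta_mult[OF r])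
        finally show "vec p (\<lambda>r. \<Sum>i<p. (u $ i \<cdot>\<^sub>v unit_vec p i) $ r) $ r = u $ r" using r by simp
      qed (use u in simp)
      ultimately show "u \<in> W" by simp
    qed
    then show ?thesis using Wc by blast
  qed
qed

definition big_ch :: "nat \<Rightarrow> nat \<Rightarrow> complex" where
  "big_ch c g = (if g < N then (if X g = 0 \<and> Y g = 0 then of_nat p * w ^ (c * Z g) else 0) else 0)"

lemma rbig_char: assumes c: "\<not> p dvd c" shows "character G (rbig c) = big_ch c"
proof
  fix g
  show "character G (rbig c) g = big_ch c g"
  proof (cases "g < N")
    case False then show ?thesis by (simp add: character_def big_ch_def)
  next
    case True
    have "character G (rbig c) g = (\<Sum>j<p. if j = (j + X g) mod p then w ^ (c * (Z g + Y g * j)) else 0)"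
      using True by (simp add: character_def mat_trace_def rbig_def)
    also have "\<dots> = (if X g = 0 \<and> Y g = 0 then of_nat p * w ^ (c * Z g) else 0)"
    proof (cases "X g = 0")
      case True
      have "(\<Sum>j<p. if j = (j + X g) mod p then w ^ (c * (Z g + Y g * j)) else 0)
          = (\<Sum>j<p. w ^ (c * Z g) * w ^ ((c * Y g) * j))"
        by (rule sum.cong) (auto simp: True power_add[symmetric] algebra_simps)
      also have "\<dots> = w ^ (c * Z g) * (if p dvd (c * Y g) then of_nat p else 0)"
        by (simp add: sum_distrib_left[symmetric] geo)
      also have "p dvd (c * Y g) \<longleftrightarrow> Y g = 0"
      proof -
        have "p dvd (c * Y g) \<longleftrightarrow> p dvd Y g" using c prime_p by (simp add: prime_dvd_mult_iff)
        also have "\<dots> \<longleftrightarrow> Y g = 0"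
        proof
          assume "p dvd Y g"
          then show "Y g = 0" using nat_dvd_not_less[of "Y g" p] Y_lt[of g] by (cases "Y g = 0") auto
        qed simp
        finally show ?thesis .
      qed
      finally show ?thesis using True by simp
    next
      case False
      have "(\<Sum>j<p. if j = (j + X g) mod p then w ^ (c * (Z g + Y g * j)) else 0) = (\<Sum>j<p. 0)"
      proof (rule sum.cong)
        fix j assume "j \<in> {..<p}"
        then have "j \<noteq> (j + X g) mod p" using mod_shift_ne[of j "X g"] False by auto
        then show "(if j = (j + X g) mod p then w ^ (c * (Z g + Y g * j)) else 0) = 0" by simp
      qed simp
      then show ?thesis using False by simp
    qed
    finally show ?thesis using True by (simp add: big_ch_def)
  qed
qed


lemma mod_cancel:
  assumes "a < p" "b < p" "(a + c) mod p = (b + c) mod p" shows "a = b"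
proof -
  have *: "x = y" if "x < p" "y < p" "x \<le> y" "(x + c) mod p = (y + c) mod p" for x y
  proof -
    have "p dvd (y + c) - (x + c)" using mod_eq_dvd_iff_nat[of "x + c" "y + c" p] that by simp
    then have "p dvd (y - x)" by simp
    moreover have "y - x < p" using that by simp
    ultimately have "y - x = 0" using nat_dvd_not_less[of "y - x" p] by (cases "y - x = 0") auto
    then show ?thesis using that by simp
  qed
  show ?thesis using *[of a b] *[of b a] assms by (cases "a \<le> b") auto
qed

lemma affine_surj:
  assumes a: "\<not> p dvd a" and t: "t < p" shows "\<exists>y<p. (z + y * a) mod p = t"
proof -
  define f where "f y = (z + y * a) mod p" for y
  have inj: "inj_on f {..<p}"
  proof (rule inj_onI)
    have *: "y1 = y2" if "y1 < p" "y2 < p" "y1 \<le> y2" "f y1 = f y2" for y1 y2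
    proof -
      have "p dvd (z + y2 * a) - (z + y1 * a)" using mod_eq_dvd_iff_nat[of "z + y1 * a" "z + y2 * a" p] that
        unfolding f_def by (simp add: mult_le_mono1)
      moreover have "(z + y2 * a) - (z + y1 * a) = (y2 - y1) * a" by (simp add: diff_mult_distrib)
      ultimately have "p dvd (y2 - y1) * a" by simp
      then have "p dvd (y2 - y1)" using a prime_p by (simp add: prime_dvd_mult_iff)
      moreover have "y2 - y1 < p" using that by simp
      ultimately have "y2 - y1 = 0" using nat_dvd_not_less[of "y2 - y1" p] by (cases "y2 - y1 = 0") auto
      then show ?thesis using that by simp
    qed
    fix y1 y2 assume "y1 \<in> {..<p}" "y2 \<in> {..<p}" "f y1 = f y2"
    then show "y1 = y2" using *[of y1 y2] *[of y2 y1] by (cases "y1 \<le> y2") auto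
  qed
  have sub: "f ` {..<p} \<subseteq> {..<p}" unfolding f_def using p_pos by auto
  have "card (f ` {..<p}) = card {..<p::nat}" using card_image[OF inj] by simp
  then have "f ` {..<p} = {..<p}" using card_subset_eq[OF _ sub] by simp
  then have "t \<in> f ` {..<p}" using t by simp
  then show ?thesis unfolding f_def by auto
qed

lemma conj_class_alt:
  assumes g: "g \<in> carrier G"
  shows "conj_class G g = {k \<in> carrier G. \<exists>h\<in>carrier G. k \<otimes>\<^bsub>G\<^esub> h = h \<otimes>\<^bsub>G\<^esub> g}"
proof -
  interpret group G by (rule group_G)
  show ?thesis
  proof (intro equalityI subsetI)
    fix k assume "k \<in> conj_class G g"
    then obtain h where h: "h \<in> carrier G" and k: "k = h \<otimes>\<^bsub>G\<^esub> g \<otimes>\<^bsub>G\<^esub> inv\<^bsub>G\<^esub> h"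
      unfolding conj_class_def by blast
    have "k \<otimes>\<^bsub>G\<^esub> h = h \<otimes>\<^bsub>G\<^esub> g" using h g unfolding k by (simp add: m_assoc del: G_simps)
    moreover have "k \<in> carrier G" using h g k by (simp del: G_simps)
    ultimately show "k \<in> {k \<in> carrier G. \<exists>h\<in>carrier G. k \<otimes>\<^bsub>G\<^esub> h = h \<otimes>\<^bsub>G\<^esub> g}" using h by blast
  next
    fix k assume "k \<in> {k \<in> carrier G. \<exists>h\<in>carrier G. k \<otimes>\<^bsub>G\<^esub> h = h \<otimes>\<^bsub>G\<^esub> g}"
    then obtain h where k: "k \<in> carrier G" and h: "h \<in> carrier G" and e: "k \<otimes>\<^bsub>G\<^esub> h = h \<otimes>\<^bsub>G\<^esub> g" by blast
    have "k = k \<otimes>\<^bsub>G\<^esub> h \<otimes>\<^bsub>G\<^esub> inv\<^bsub>G\<^esub> h" using k h by (simp add: m_assoc del: G_simps)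
    also have "\<dots> = h \<otimes>\<^bsub>G\<^esub> g \<otimes>\<^bsub>G\<^esub> inv\<^bsub>G\<^esub> h" using e by simp
    finally show "k \<in> conj_class G g" unfolding conj_class_def using h by blast
  qed
qed

definition Cl :: "nat \<Rightarrow> nat \<Rightarrow> nat set" where "Cl x y = {g. g < N \<and> X g = x \<and> Y g = y}"

lemma comm_eq:
  assumes "mul k h = mul h g"
  shows "X k = X g" "Y k = Y g" "(Z k + Z h + Y k * X h) mod p = (Z h + Z g + Y h * X g) mod p"
proof -
  have "(X k + X h) mod p = (X g + X h) mod p" using arg_cong[OF assms, of X] by (simp add: add.commute)
  then show "X k = X g" by (rule mod_cancel[OF X_lt X_lt])
  have "(Y k + Y h) mod p = (Y g + Y h) mod p" using arg_cong[OF assms, of Y] by (simp add: add.commute)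
  then show "Y k = Y g" by (rule mod_cancel[OF Y_lt Y_lt])
  show "(Z k + Z h + Y k * X h) mod p = (Z h + Z g + Y h * X g) mod p" using arg_cong[OF assms, of Z] by simp
qed

lemma class_central:
  assumes g: "g < N" and xy: "X g = 0" "Y g = 0"
  shows "conj_class G g = {g}"
proof -
  have "k = g" if k: "k < N" and e: "mul k h = mul h g" for k h
  proof -
    note ce = comm_eq[OF e]
    have "(Z k + Z h) mod p = (Z g + Z h) mod p" using ce xy by (simp add: add.commute)
    then have zz: "Z k = Z g" by (rule mod_cancel[OF Z_lt[OF k] Z_lt[OF g]])
    show ?thesis by (rule heq) (use ce zz in auto)
  qed
  moreover have "mul g 0 = mul 0 g" by (rule heq) (use g Z_lt[OF g] in auto)
  ultimately show ?thesis unfolding conj_class_alt[of g, simplified, OF g] using g N_pos by auto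
qed

lemma class_noncentral:
  assumes g: "g < N" and xy: "\<not> (X g = 0 \<and> Y g = 0)"
  shows "conj_class G g = Cl (X g) (Y g)"
proof -
  have "k \<in> conj_class G g" if k: "k \<in> Cl (X g) (Y g)" for k
  proof -
    from k have kN: "k < N" and kx: "X k = X g" and ky: "Y k = Y g" unfolding Cl_def by auto
    have Zk: "Z k < p" using Z_lt[OF kN] .
    have "\<exists>h<N. mul k h = mul h g"
    proof (cases "X g = 0")
      case False
      then have "\<not> p dvd X g" using X_lt[of g] nat_dvd_not_less[of "X g" p] by auto
      then obtain y where y: "y < p" "(Z g + y * X g) mod p = Z k" using affine_surj[OF _ Zk] by blast
      define h where "h = E 0 y 0"
      have h: "X h = 0" "Y h = y" "Z h = 0" "h < N" unfolding h_def using y p_pos E_lt by auto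
      have "mul k h = mul h g"
      proof (rule heq)
        show "X (mul k h) = X (mul h g)" using h kx by simp
        show "Y (mul k h) = Y (mul h g)" using h ky by (simp add: add.commute)
        show "Z (mul k h) = Z (mul h g)" using h y Zk by simp
      qed
      then show ?thesis using h by blast
    next
      case True
      then have "Y g \<noteq> 0" using xy by simp
      then have "\<not> p dvd Y g" using Y_lt[of g] nat_dvd_not_less[of "Y g" p] by auto
      then obtain x where x: "x < p" "(Z k + x * Y g) mod p = Z g" using affine_surj[OF _ Z_lt[OF g]] by blast
      define h where "h = E x 0 0"
      have h: "X h = x" "Y h = 0" "Z h = 0" "h < N" unfolding h_def using x p_pos E_lt by auto
      have "mul k h = mul h g"
      proof (rule heq)
        show "X (mul k h) = X (mul h g)" using h kx by (simp add: add.commute)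
        show "Y (mul k h) = Y (mul h g)" using h ky by simp
        show "Z (mul k h) = Z (mul h g)" using h x ky True Z_lt[OF g] by (simp add: mult.commute)
      qed
      then show ?thesis using h by blast
    qed
    then obtain h where hN: "h < N" and e: "mul k h = mul h g" by blast
    have "k \<in> {k \<in> carrier G. \<exists>h\<in>carrier G. k \<otimes>\<^bsub>G\<^esub> h = h \<otimes>\<^bsub>G\<^esub> g}"
      using kN hN e by auto
    then show ?thesis using conj_class_alt[of g] g by simp
  qed
  moreover have "k \<in> Cl (X g) (Y g)" if "k \<in> conj_class G g" for k
  proof -
    from that obtain h where "k < N" "h < N" "mul k h = mul h g"
      unfolding conj_class_alt[of g, simplified, OF g] by auto
    then show ?thesis using comm_eq(1,2)[of k h g] unfolding Cl_def by simp
  qed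
  ultimately show ?thesis by blast
qed


definition Pset :: "(nat \<times> nat) set" where "Pset = {..<p} \<times> {..<p} - {(0, 0)}"

lemma E00_lt: "z < p \<Longrightarrow> E 0 0 z < N" using E_lt p_pos by simp

lemma classes_eq: "conj_classes G = (\<lambda>z. {E 0 0 z}) ` {..<p} \<union> (\<lambda>(x,y). Cl x y) ` Pset"
proof (intro equalityI subsetI)
  fix C assume "C \<in> conj_classes G"
  then obtain g where g: "g < N" and C: "C = conj_class G g" unfolding conj_classes_def by auto
  show "C \<in> (\<lambda>z. {E 0 0 z}) ` {..<p} \<union> (\<lambda>(x,y). Cl x y) ` Pset"
  proof (cases "X g = 0 \<and> Y g = 0")
    case True
    then have "C = {E 0 0 (Z g)}" using class_central[OF g] C E_XYZ[of g] by simp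
    moreover have "Z g < p" using Z_lt[OF g] .
    ultimately show ?thesis by blast
  next
    case False
    then have "C = Cl (X g) (Y g)" using class_noncentral[OF g] C by simp
    moreover have "(X g, Y g) \<in> Pset" unfolding Pset_def using False by auto
    ultimately show ?thesis by force
  qed
next
  fix C assume "C \<in> (\<lambda>z. {E 0 0 z}) ` {..<p} \<union> (\<lambda>(x,y). Cl x y) ` Pset"
  then consider (a) z where "z < p" "C = {E 0 0 z}" | (b) x y where "(x, y) \<in> Pset" "C = Cl x y"
    by auto
  then show "C \<in> conj_classes G"
  proof cases
    case a
    have "C = conj_class G (E 0 0 z)" using a class_central[OF E00_lt[OF a(1)]] p_pos by simp
    then show ?thesis unfolding conj_classes_def using E00_lt[OF a(1)] by simp
  next
    case b
    have xy: "x < p" "y < p" "\<not> (x = 0 \<and> y = 0)" using b(1) unfolding Pset_def by auto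
    have lt: "E x y 0 < N" using E_lt xy p_pos by simp
    have "C = conj_class G (E x y 0)" using b class_noncentral[OF lt] xy by simp
    then show ?thesis unfolding conj_classes_def using lt by simp
  qed
qed

lemma some_Cl:
  assumes "(x, y) \<in> Pset"
  shows "(SOME g. g \<in> Cl x y) < N" "X (SOME g. g \<in> Cl x y) = x" "Y (SOME g. g \<in> Cl x y) = y"
proof -
  have xy: "x < p" "y < p" using assms unfolding Pset_def by auto
  have "E x y 0 \<in> Cl x y" unfolding Cl_def using xy E_lt p_pos by simp
  then have "(SOME g. g \<in> Cl x y) \<in> Cl x y" by (rule someI)
  then show "(SOME g. g \<in> Cl x y) < N" "X (SOME g. g \<in> Cl x y) = x" "Y (SOME g. g \<in> Cl x y) = y"
    unfolding Cl_def by auto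
qed

lemma class_sum:
  "(\<Sum>C\<in>conj_classes G. f (SOME g. g \<in> C)) =
     (\<Sum>z<p. f (E 0 0 z)) + (\<Sum>(x,y)\<in>Pset. (f (SOME g. g \<in> Cl x y) :: complex))"
proof -
  have inj1: "inj_on (\<lambda>z. {E 0 0 z}) {..<p}"
  proof (rule inj_onI)
    fix z z' assume "z \<in> {..<p}" "z' \<in> {..<p}" "{E 0 0 z} = {E 0 0 z'}"
    then have "Z (E 0 0 z) = Z (E 0 0 z')" by simp
    then show "z = z'" using p_pos by simp
  qed
  have inj2: "inj_on (\<lambda>(x,y). Cl x y) Pset"
  proof (rule inj_onI)
    fix a b assume a: "a \<in> Pset" and b: "b \<in> Pset" and e: "(\<lambda>(x,y). Cl x y) a = (\<lambda>(x,y). Cl x y) b"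
    obtain x y where a': "a = (x, y)" by (cases a)
    obtain x' y' where b': "b = (x', y')" by (cases b)
    have xy: "x < p" "y < p" using a a' unfolding Pset_def by auto
    have "E x y 0 \<in> Cl x y" unfolding Cl_def using xy E_lt p_pos by simp
    then have "E x y 0 \<in> Cl x' y'" using e a' b' by simp
    then show "a = b" unfolding Cl_def using a' b' xy by simp
  qed
  have disj: "(\<lambda>z. {E 0 0 z}) ` {..<p} \<inter> (\<lambda>(x,y). Cl x y) ` Pset = {}"
  proof (rule ccontr)
    assume "\<not> ?thesis"
    then obtain z x y where z: "z < p" and xy: "(x, y) \<in> Pset" and e: "{E 0 0 z} = Cl x y" by auto
    have "E 0 0 z \<in> Cl x y" using e by auto
    then have "x = 0" "y = 0" unfolding Cl_def using p_pos by auto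
    with xy show False unfolding Pset_def by simp
  qed
  have fin: "finite Pset" unfolding Pset_def by simp
  have "(\<Sum>C\<in>conj_classes G. f (SOME g. g \<in> C)) =
     (\<Sum>C\<in>(\<lambda>z. {E 0 0 z}) ` {..<p}. f (SOME g. g \<in> C)) + (\<Sum>C\<in>(\<lambda>(x,y). Cl x y) ` Pset. f (SOME g. g \<in> C))"
    unfolding classes_eq by (rule sum.union_disjoint) (use fin disj in auto)
  also have "(\<Sum>C\<in>(\<lambda>z. {E 0 0 z}) ` {..<p}. f (SOME g. g \<in> C)) = (\<Sum>z<p. f (E 0 0 z))"
    by (subst sum.reindex[OF inj1]) simp
  also have "(\<Sum>C\<in>(\<lambda>(x,y). Cl x y) ` Pset. f (SOME g. g \<in> C)) = (\<Sum>(x,y)\<in>Pset. f (SOME g. g \<in> Cl x y))"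
    by (subst sum.reindex[OF inj2]) (simp add: case_prod_beta)
  finally show ?thesis .
qed


definition Lset :: "(nat \<Rightarrow> complex) set" where
  "Lset = (\<lambda>(a,b). lin_ch a b) ` ({..<p} \<times> {..<p}) \<union> big_ch ` {1..<p}"

lemma pp_gt1: "1 < p * p" by (rule less_1_mult[OF p_gt1 p_gt1])
lemma one_lt: "1 < N" unfolding N_def by (rule less_1_mult[OF pp_gt1 p_gt1])
lemma p_lt: "p < N"
proof -
  have "p * 1 < p * (p * p)" by (rule mult_strict_left_mono[OF pp_gt1 p_pos])
  then show ?thesis unfolding N_def by (simp add: mult.assoc)
qed
lemma pp_lt: "p * p < N"
proof -
  have "(p * p) * 1 < (p * p) * p" by (rule mult_strict_left_mono[OF p_gt1]) (use p_pos in simp)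
  then show ?thesis unfolding N_def by simp
qed

lemma X1: "X 1 = 1" "Y 1 = 0" unfolding X_def Y_def using p_gt1 by auto
lemma Xp: "X p = 0" "Y p = 1" unfolding X_def Y_def using p_gt1 by auto
lemma Xpp: "X (p * p) = 0" "Y (p * p) = 0" "Z (p * p) = 1" unfolding X_def Y_def Z_def using p_gt1 by auto

lemma lin_inj: "inj_on (\<lambda>(a,b). lin_ch a b) ({..<p} \<times> {..<p})"
proof (rule inj_onI)
  fix u v assume u: "u \<in> {..<p} \<times> {..<p}" and v: "v \<in> {..<p} \<times> {..<p}"
    and e: "(\<lambda>(a,b). lin_ch a b) u = (\<lambda>(a,b). lin_ch a b) v"
  obtain a b where u': "u = (a, b)" by (cases u)
  obtain a' b' where v': "v = (a', b')" by (cases v)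
  have e': "lin_ch a b = lin_ch a' b'" using e u' v' by simp
  have "w ^ a = w ^ a'" using fun_cong[OF e', of 1] one_lt X1 by (simp add: lin_ch_def)
  then have "a = a'" using u v u' v' by (intro w_inj) auto
  moreover have "w ^ b = w ^ b'" using fun_cong[OF e', of p] p_lt Xp by (simp add: lin_ch_def)
  then have "b = b'" using u v u' v' by (intro w_inj) auto
  ultimately show "u = v" using u' v' by simp
qed

lemma big_inj: "inj_on big_ch {1..<p}"
proof (rule inj_onI)
  fix c c' assume c: "c \<in> {1..<p}" and c': "c' \<in> {1..<p}" and e: "big_ch c = big_ch c'"
  have "of_nat p * w ^ c = of_nat p * w ^ c'" using fun_cong[OF e, of "p * p"] pp_lt Xpp by (simp add: big_ch_def)
  then have "w ^ c = w ^ c'" using p_pos by simp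
  then show "c = c'" using c c' by (intro w_inj) auto
qed

lemma lin_ch_0: "lin_ch a b 0 = 1" using N_pos by (simp add: lin_ch_def)
lemma big_ch_0: "big_ch c 0 = of_nat p" using N_pos by (simp add: big_ch_def)

lemma L_disj: "(\<lambda>(a,b). lin_ch a b) ` ({..<p} \<times> {..<p}) \<inter> big_ch ` {1..<p} = {}"
proof (rule ccontr)
  assume "\<not> ?thesis"
  then obtain a b c where "lin_ch a b = big_ch c" by auto
  then have "lin_ch a b 0 = big_ch c 0" by simp
  then have "(1::complex) = of_nat p" by (simp add: lin_ch_0 big_ch_0)
  then have "of_nat p = (of_nat 1 :: complex)" by simp
  then have "p = 1" by (simp only: of_nat_eq_iff)
  then show False using p_gt1 by simp
qed

lemma Lsum: "(\<Sum>\<psi>\<in>Lset. F \<psi>) = (\<Sum>(a,b)\<in>{..<p} \<times> {..<p}. F (lin_ch a b)) + (\<Sum>c\<in>{1..<p}. (F (big_ch c) :: complex))"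
proof -
  have "(\<Sum>\<psi>\<in>Lset. F \<psi>) = (\<Sum>\<psi>\<in>(\<lambda>(a,b). lin_ch a b) ` ({..<p} \<times> {..<p}). F \<psi>) + (\<Sum>\<psi>\<in>big_ch ` {1..<p}. F \<psi>)"
    unfolding Lset_def by (rule sum.union_disjoint) (use L_disj in auto)
  also have "(\<Sum>\<psi>\<in>(\<lambda>(a,b). lin_ch a b) ` ({..<p} \<times> {..<p}). F \<psi>) = (\<Sum>(a,b)\<in>{..<p} \<times> {..<p}. F (lin_ch a b))"
    by (subst sum.reindex[OF lin_inj]) (simp add: case_prod_beta)
  also have "(\<Sum>\<psi>\<in>big_ch ` {1..<p}. F \<psi>) = (\<Sum>c\<in>{1..<p}. F (big_ch c))"
    by (subst sum.reindex[OF big_inj]) simp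
  finally show ?thesis .
qed

lemma L_sub: "Lset \<subseteq> irr_chars G"
proof
  fix \<psi> assume "\<psi> \<in> Lset"
  then consider (a) a b where "\<psi> = lin_ch a b" | (b) c where "c \<in> {1..<p}" "\<psi> = big_ch c"
    unfolding Lset_def by auto
  then show "\<psi> \<in> irr_chars G"
  proof cases
    case a
    then have "\<psi> = character G (rlin a b) \<and> irreducible_rep G 1 (rlin a b)" using rlin_irr rlin_char by simp
    then show ?thesis unfolding irr_chars_def by blast
  next
    case b
    then have "\<not> p dvd c" using nat_dvd_not_less[of c p] by auto
    then have "\<psi> = character G (rbig c) \<and> irreducible_rep G p (rbig c)" using rbig_irr rbig_char b(2) by simp
    then show ?thesis unfolding irr_chars_def by blast
  qed
qed

lemma Fsum: "t < p \<Longrightarrow> (\<Sum>y<p. w ^ (t * y)) = (if t = 0 then of_nat p else 0)"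
proof -
  assume t: "t < p"
  have "p dvd t \<longleftrightarrow> t = 0" using t nat_dvd_not_less[of t p] by (cases "t = 0") auto
  then show ?thesis by (simp add: geo)
qed

lemma sum_1p: "(\<Sum>c\<in>{1..<p}. f c) = (\<Sum>c<p. f c) - (f 0 :: complex)"
proof -
  have "(\<Sum>c<p. f c) = f 0 + (\<Sum>c\<in>{Suc 0..<p}. f c)"
    using p_pos by (simp add: lessThan_atLeast0 sum.atLeast_Suc_lessThan)
  then show ?thesis by simp
qed

lemma lin_sum: "(\<Sum>(a,b)\<in>{..<p} \<times> {..<p}. w ^ (a * x + b * y)) = (\<Sum>a<p. w ^ (x * a)) * (\<Sum>b<p. w ^ (y * b))"
proof -
  have "(\<Sum>(a,b)\<in>{..<p} \<times> {..<p}. w ^ (a * x + b * y)) = (\<Sum>a<p. \<Sum>b<p. w ^ (x * a) * w ^ (y * b))"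
    by (simp add: sum.cartesian_product[symmetric] power_add mult.commute)
  also have "\<dots> = (\<Sum>a<p. w ^ (x * a)) * (\<Sum>b<p. w ^ (y * b))" by (simp add: sum_product)
  finally show ?thesis .
qed

lemma R_cond:
  assumes h: "h < N"
  shows "(\<Sum>\<psi>\<in>Lset. \<psi> 0 * \<psi> h) = (if h = 0 then of_nat N else 0)"
proof -
  have A: "(\<Sum>(a,b)\<in>{..<p} \<times> {..<p}. lin_ch a b 0 * lin_ch a b h)
        = (if X h = 0 then of_nat p else 0) * (if Y h = 0 then of_nat p else 0)"
  proof -
    have "(\<Sum>(a,b)\<in>{..<p} \<times> {..<p}. lin_ch a b 0 * lin_ch a b h) = (\<Sum>(a,b)\<in>{..<p} \<times> {..<p}. w ^ (a * X h + b * Y h))"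
      by (rule sum.cong) (use h in \<open>auto simp: lin_ch_0 lin_ch_def\<close>)
    also have "\<dots> = (if X h = 0 then of_nat p else 0) * (if Y h = 0 then of_nat p else 0)"
      by (simp add: lin_sum Fsum)
    finally show ?thesis .
  qed
  have B: "(\<Sum>c\<in>{1..<p}. big_ch c 0 * big_ch c h)
        = (if X h = 0 \<and> Y h = 0 then of_nat p * of_nat p * ((if Z h = 0 then of_nat p else 0) - 1) else 0)"
  proof (cases "X h = 0 \<and> Y h = 0")
    case True
    have "(\<Sum>c\<in>{1..<p}. big_ch c 0 * big_ch c h) = (\<Sum>c\<in>{1..<p}. of_nat p * of_nat p * w ^ (Z h * c))"
      by (rule sum.cong) (use h True in \<open>auto simp: big_ch_0 big_ch_def mult.commute\<close>)
    also have "\<dots> = of_nat p * of_nat p * (\<Sum>c\<in>{1..<p}. w ^ (Z h * c))" by (simp add: sum_distrib_left)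
    also have "(\<Sum>c\<in>{1..<p}. w ^ (Z h * c)) = (if Z h = 0 then of_nat p else 0) - 1"
      unfolding sum_1p by (simp add: Fsum Z_lt[OF h])
    finally show ?thesis using True by simp
  next
    case False
    have "(\<Sum>c\<in>{1..<p}. big_ch c 0 * big_ch c h) = (\<Sum>c\<in>{1..<p}. 0)"
      by (rule sum.cong) (use h False in \<open>auto simp: big_ch_def\<close>)
    then show ?thesis unfolding if_not_P[OF False] by simp
  qed
  have h0: "h = 0 \<longleftrightarrow> X h = 0 \<and> Y h = 0 \<and> Z h = 0"
  proof
    assume "X h = 0 \<and> Y h = 0 \<and> Z h = 0"
    then show "h = 0" by (intro heq[of h 0]) auto
  qed auto
  have "(\<Sum>\<psi>\<in>Lset. \<psi> 0 * \<psi> h) = (\<Sum>(a,b)\<in>{..<p} \<times> {..<p}. lin_ch a b 0 * lin_ch a b h) + (\<Sum>c\<in>{1..<p}. big_ch c 0 * big_ch c h)"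
    by (rule Lsum)
  also have "\<dots> = (if h = 0 then of_nat N else 0)"
    unfolding A B h0 N_def by (auto simp: algebra_simps)
  finally show ?thesis .
qed

lemma irr_eq: "irr_chars G = Lset"
proof
  show "Lset \<subseteq> irr_chars G" by (rule L_sub)
  have finL: "finite Lset" unfolding Lset_def by simp
  show "irr_chars G \<subseteq> Lset"
    by (rule completeness[OF group_G _ finL L_sub]) (use R_cond in auto)
qed


lemma E00_XYZ: "z < p \<Longrightarrow> X (E 0 0 z) = 0 \<and> Y (E 0 0 z) = 0 \<and> Z (E 0 0 z) = z"
  using p_pos by simp

lemma lin_col:
  assumes a: "a < p" and b: "b < p"
  shows "(\<Sum>C\<in>conj_classes G. lin_ch a b (SOME g. g \<in> C))
       = of_nat p + (if a = 0 then of_nat p else 0) * (if b = 0 then of_nat p else 0) - 1"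
proof -
  have s1: "(\<Sum>z<p. lin_ch a b (E 0 0 z)) = of_nat p"
  proof -
    have "(\<Sum>z<p. lin_ch a b (E 0 0 z)) = (\<Sum>z<p. 1)"
      by (rule sum.cong) (auto simp: lin_ch_def E00_lt E00_XYZ)
    then show ?thesis by simp
  qed
  have fin: "finite ({..<p} \<times> {..<p})" by simp
  have s2: "(\<Sum>(x,y)\<in>Pset. lin_ch a b (SOME g. g \<in> Cl x y))
      = (if a = 0 then of_nat p else 0) * (if b = 0 then of_nat p else 0) - 1"
  proof -
    have "(\<Sum>(x,y)\<in>Pset. lin_ch a b (SOME g. g \<in> Cl x y)) = (\<Sum>(x,y)\<in>Pset. w ^ (x * a + y * b))"
    proof (rule sum.cong)
      fix u assume u: "u \<in> Pset"
      obtain x y where u': "u = (x, y)" by (cases u)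
      have "lin_ch a b (SOME g. g \<in> Cl x y) = w ^ (a * x + b * y)"
        using some_Cl[of x y] u u' by (simp add: lin_ch_def)
      also have "a * x + b * y = x * a + y * b" by (simp add: mult.commute)
      finally show "(\<lambda>(x,y). lin_ch a b (SOME g. g \<in> Cl x y)) u = (\<lambda>(x,y). w ^ (x * a + y * b)) u"
        using u' by simp
    qed simp
    also have "\<dots> = (\<Sum>(x,y)\<in>{..<p} \<times> {..<p}. w ^ (x * a + y * b)) - 1"
      unfolding Pset_def using p_pos by (subst sum_diff1[OF fin]) simp
    also have "(\<Sum>(x,y)\<in>{..<p} \<times> {..<p}. w ^ (x * a + y * b)) = (\<Sum>x<p. w ^ (a * x)) * (\<Sum>y<p. w ^ (b * y))"
      by (rule lin_sum)
    finally show ?thesis using a b by (simp add: Fsum)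
  qed
  show ?thesis unfolding class_sum s1 s2 by simp
qed

lemma big_col:
  assumes c: "c \<in> {1..<p}"
  shows "(\<Sum>C\<in>conj_classes G. big_ch c (SOME g. g \<in> C)) = 0"
proof -
  have nd: "\<not> p dvd c" using c nat_dvd_not_less[of c p] by auto
  have s1: "(\<Sum>z<p. big_ch c (E 0 0 z)) = 0"
  proof -
    have "(\<Sum>z<p. big_ch c (E 0 0 z)) = (\<Sum>z<p. of_nat p * w ^ (c * z))"
      by (rule sum.cong) (auto simp: big_ch_def E00_lt E00_XYZ)
    also have "\<dots> = of_nat p * (\<Sum>z<p. w ^ (c * z))" by (simp add: sum_distrib_left)
    also have "\<dots> = 0" using nd by (simp add: geo)
    finally show ?thesis .
  qed
  have s2: "(\<Sum>(x,y)\<in>Pset. big_ch c (SOME g. g \<in> Cl x y)) = 0"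
  proof (rule sum.neutral, rule ballI)
    fix u assume u: "u \<in> Pset"
    obtain x y where u': "u = (x, y)" by (cases u)
    have "\<not> (x = 0 \<and> y = 0)" using u u' unfolding Pset_def by auto
    then show "(\<lambda>(x,y). big_ch c (SOME g. g \<in> Cl x y)) u = 0"
      using some_Cl[of x y] u u' by (auto simp: big_ch_def)
  qed
  show ?thesis unfolding class_sum s1 s2 by simp
qed

lemma Fdelta: "(\<Sum>a<p. (if a = 0 then of_nat p else 0)) = (of_nat p :: complex)"
  using p_pos by (simp add: sum.delta)

lemma cts: "char_table_sum G = of_nat (p * p * p)"
proof -
  have "char_table_sum G = (\<Sum>\<chi>\<in>Lset. \<Sum>C\<in>conj_classes G. \<chi> (SOME g. g \<in> C))"
    unfolding char_table_sum_def irr_eq ..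
  also have "\<dots> = (\<Sum>(a,b)\<in>{..<p} \<times> {..<p}. \<Sum>C\<in>conj_classes G. lin_ch a b (SOME g. g \<in> C))
       + (\<Sum>c\<in>{1..<p}. \<Sum>C\<in>conj_classes G. big_ch c (SOME g. g \<in> C))"
    by (rule Lsum)
  also have "(\<Sum>c\<in>{1..<p}. \<Sum>C\<in>conj_classes G. big_ch c (SOME g. g \<in> C)) = 0"
    by (rule sum.neutral) (use big_col in auto)
  also have "(\<Sum>(a,b)\<in>{..<p} \<times> {..<p}. \<Sum>C\<in>conj_classes G. lin_ch a b (SOME g. g \<in> C))
      = (\<Sum>(a,b)\<in>{..<p} \<times> {..<p}. (of_nat p - 1) + (if a = 0 then of_nat p else 0) * (if b = 0 then of_nat p else 0))"
    by (rule sum.cong) (auto simp: lin_col)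
  also have "\<dots> = (\<Sum>(a,b)\<in>{..<p} \<times> {..<p}. (of_nat p - 1 :: complex)) +
       (\<Sum>(a,b)\<in>{..<p} \<times> {..<p}. (if a = 0 then of_nat p else 0) * (if b = 0 then of_nat p else 0))"
    by (simp add: sum.distrib case_prod_beta)
  also have "(\<Sum>(a,b)\<in>{..<p} \<times> {..<p}. (if a = 0 then of_nat p else 0) * (if b = 0 then (of_nat p :: complex) else 0))
      = (\<Sum>a<p. (if a = 0 then of_nat p else 0)) * (\<Sum>b<p. (if b = 0 then of_nat p else 0))"
    by (subst sum.cartesian_product[symmetric]) (rule sum_product[symmetric])
  also have "\<dots> = of_nat p * of_nat p" by (simp only: Fdelta)
  also have "(\<Sum>(a,b)\<in>{..<p} \<times> {..<p}. (of_nat p - 1 :: complex)) = of_nat p * of_nat p * (of_nat p - 1)"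
    by simp
  finally have "char_table_sum G = of_nat p * of_nat p * (of_nat p - 1) + of_nat p * of_nat p + 0" .
  also have "\<dots> = of_nat (p * p * p)" by (simp add: algebra_simps)
  finally show ?thesis .
qed

lemma gam: "Gamma_e G = of_nat (p * p + (p - 1) * p)"
proof -
  have "Gamma_e G = (\<Sum>\<chi>\<in>Lset. \<chi> 0)"
    unfolding Gamma_e_def irr_eq by simp
  also have "\<dots> = (\<Sum>(a,b)\<in>{..<p} \<times> {..<p}. lin_ch a b 0) + (\<Sum>c\<in>{1..<p}. big_ch c 0)"
    by (rule Lsum)
  also have "\<dots> = of_nat (p * p) + of_nat ((p - 1) * p)"
    by (simp add: lin_ch_0 big_ch_0 case_prod_beta)
  finally show ?thesis by simp
qed

end

theorem heis_exists:
  fixes m :: int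
  assumes "m > 1"
  shows "\<exists>G :: nat monoid. group G \<and> finite (carrier G) \<and>
           char_table_sum G \<in> \<real> \<and> Gamma_e G \<in> \<real> \<and>
           Re (char_table_sum G) > of_int m * Re (Gamma_e G)"
proof -
  obtain p :: nat where p: "prime p" "p > nat (2 * m)" using bigger_prime by blast
  interpret H: heis p by (unfold_locales) (rule p(1))
  have pm: "real p > 2 * of_int m" using p(2) assms by linarith
  have p1: "p \<ge> 1" using H.p_pos by simp
  have ineq: "real (p * p * p) > of_int m * real (p * p + (p - 1) * p)"
  proof -
    obtain q where q: "p = Suc q" using p1 by (cases p) auto
    have e: "real (p * p + (p - 1) * p) = 2 * real p * real p - real p" unfolding q by (simp add: algebra_simps)
    have "real p * real p * (real p - 2 * of_int m) > 0" using pm H.p_pos by simp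
    moreover have "of_int m * real p > 0" using assms H.p_pos by simp
    ultimately have "real p * real p * real p > of_int m * (2 * real p * real p - real p)"
      by (simp add: algebra_simps)
    then show ?thesis unfolding e by simp
  qed
  show ?thesis
  proof (intro exI conjI)
    show "group H.G" by (rule H.group_G)
    show "finite (carrier H.G)" by simp
    show "char_table_sum H.G \<in> \<real>" unfolding H.cts by simp
    show "Gamma_e H.G \<in> \<real>" unfolding H.gam by simp
    show "Re (char_table_sum H.G) > of_int m * Re (Gamma_e H.G)"
      unfolding H.cts H.gam using ineq by simp
  qed
qed


theorem proposition2p9:
  fixes m :: int
  assumes "m > 1"
  shows "\<exists>G :: nat monoid. group G \<and> finite (carrier G) \<and>
           char_table_sum G \<in> \<real> \<and> Gamma_e G \<in> \<real> \<and>
           Re (char_table_sum G) > of_int m * Re (Gamma_e G)"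
  using heis_exists[OF assms] .

end
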